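(* Let $K$ be a field of characteristic not equal to $3$, and let $\phi(z)\in K[z]$ be a cubic polynomial. Then there is a degree one polynomial $\eta\in K[z]$ such that $\psi=\eta^{-1}\circ\phi\circ\eta$ is in normal form. Moreover, if another degree one polynomial $\tilde{\eta}\in K[z]$ also gives a normal form $\tilde{\psi}=\tilde{\eta}^{-1}\circ\phi\circ\tilde{\eta}$, then either $\tilde{\eta}=\eta$ and $\tilde{\psi}=\psi$, or else both normal forms $\psi(z)=az^3+bz$ and $\tilde{\psi}(z)=\tilde{a}z^3+bz$ are of the form $az^3+bz$ with the same linear coefficient $b$, and the quotient $\tilde{a}/a$ of their lead coefficients is the square of an element of $K$.
   Context: A cubic polynomial $\phi\in K[z]$ is said to be in normal form if either $\phi(z)=az^3+bz+1$ or $\phi(z)=az^3+bz$ for some $a,b\in K$ (with $a\neq0$). *)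

theory Defs
  imports "HOL-Computational_Algebra.Polynomial"
begin

definition lin_inv :: "'a::field poly \<Rightarrow> 'a poly" where
  "lin_inv eta = [: - coeff eta 0 / coeff eta 1, 1 / coeff eta 1 :]"

definition conj_poly :: "'a::field poly \<Rightarrow> 'a poly \<Rightarrow> 'a poly" where
  "conj_poly phi eta = pcompose (lin_inv eta) (pcompose phi eta)"

definition normal_form :: "'a::field poly \<Rightarrow> bool" where
  "normal_form psi \<longleftrightarrow> (\<exists>a b. a \<noteq> 0 \<and> (psi = [:1, b, 0, a:] \<or> psi = [:0, b, 0, a:]))"

end

theory Submission imports Defs begin
lemma three_nz: "CHAR('a::field) \<noteq> 3 \<Longrightarrow> (3::'a) \<noteq> 0"
proof
  assume h: "CHAR('a) \<noteq> 3" "(3::'a) = 0"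
  have "of_nat 3 = (0::'a)" using h by simp
  hence d: "CHAR('a) dvd 3" by (simp only: of_nat_eq_0_iff_char_dvd)
  hence "CHAR('a) \<le> 3" "CHAR('a) > 0" using dvd_imp_le by (auto intro: Nat.gr0I)
  hence "CHAR('a) = 1 \<or> CHAR('a) = 2 \<or> CHAR('a) = 3" by linarith
  hence "CHAR('a) = 1 \<or> CHAR('a) = 2" using h by blast
  moreover have "CHAR('a) \<noteq> 2" using d by (metis dvd_triv_left numeral_3_eq_3 even_Suc odd_numeral numeral_2_eq_2 nat_dvd_1_iff_1 odd_pos)
  moreover have "CHAR('a) \<noteq> 1" using of_nat_CHAR[where 'a='a] by auto
  ultimately show False by auto
qed

lemma conj_formula:
  fixes p0 p1 p2 p3 d c :: "'a::field"
  assumes "c \<noteq> 0"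
  shows "conj_poly [:p0,p1,p2,p3:] [:d,c:] =
     [:(p0 + p1*d + p2*d^2 + p3*d^3 - d)/c, p1 + 2*p2*d + 3*p3*d^2, (p2 + 3*p3*d)*c, p3*c^2:]"
  using assms
  by (simp add: conj_poly_def lin_inv_def pcompose_pCons algebra_simps field_simps power2_eq_square power3_eq_cube numeral_3_eq_3 numeral_2_eq_2)

lemma deg3_form: "degree (p::'a::field poly) = 3 \<Longrightarrow> p = [:coeff p 0, coeff p 1, coeff p 2, coeff p 3:]"
  apply (rule poly_eqI)
  subgoal for n by (cases n; cases "n-1"; cases "n-2"; cases "n-3"; auto simp: coeff_eq_0 coeff_pCons numeral_2_eq_2 numeral_3_eq_3 split: nat.splits)
  done

lemma deg1_form: "degree (p::'a::field poly) = 1 \<Longrightarrow> p = [:coeff p 0, coeff p 1:] \<and> coeff p 1 \<noteq> 0"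
proof -
  assume a: "degree p = 1"
  hence "p \<noteq> 0" by auto
  hence c: "coeff p (degree p) \<noteq> 0" by simp
  have "p = [:coeff p 0, coeff p 1:]"
    apply (rule poly_eqI)
    subgoal for n using a by (cases n; cases "n-1"; auto simp: coeff_eq_0 coeff_pCons split: nat.splits)
    done
  thus ?thesis using a c by simp
qed

theorem proposition4p2:
  fixes phi :: "'a::field poly"
  assumes "CHAR('a) \<noteq> 3"
    and "degree phi = 3"
  shows "\<exists>eta. degree eta = 1 \<and> normal_form (conj_poly phi eta) \<and>
           (\<forall>eta'. degree eta' = 1 \<and> normal_form (conj_poly phi eta') \<longrightarrow>
              (eta' = eta \<and> conj_poly phi eta' = conj_poly phi eta) \<or>
              (\<exists>a a' b. a \<noteq> 0 \<and> a' \<noteq> 0 \<and>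
                 conj_poly phi eta = [:0, b, 0, a:] \<and>
                 conj_poly phi eta' = [:0, b, 0, a':] \<and>
                 (\<exists>c. a' / a = c ^ 2)))"
proof -
  have t3: "(3::'a) \<noteq> 0" using three_nz assms(1) by blast
  define p0 p1 p2 p3 where "p0 = coeff phi 0" "p1 = coeff phi 1" "p2 = coeff phi 2" "p3 = coeff phi 3"
  have ph: "phi = [:p0,p1,p2,p3:]" using deg3_form[OF assms(2)] p0_p1_p2_p3_def by simp
  have p3: "p3 \<noteq> 0" using assms(2) p0_p1_p2_p3_def
  proof - have "phi \<noteq> 0" using assms(2) by auto hence "coeff phi (degree phi) \<noteq> 0" by simp thus ?thesis using assms(2) p0_p1_p2_p3_def by simp qed
  define d0 where "d0 = - p2 / (3*p3)"
  define e where "e = p0 + p1*d0 + p2*d0^2 + p3*d0^3 - d0"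
  define b0 where "b0 = p1 + 2*p2*d0 + 3*p3*d0^2"
  have k: "p2 + 3*p3*d0 = 0" using t3 p3 by (simp add: d0_def field_simps)
  have uniqd: "d = d0" if "p2 + 3*p3*d = 0" for d
    using that t3 p3 by (simp add: d0_def field_simps) (metis add.commute add_diff_cancel_right' diff_0 mult.commute)
  define c0 where "c0 = (if e = 0 then 1 else e)"
  have c0: "c0 \<noteq> 0" by (simp add: c0_def)
  define eta where "eta = [:d0, c0:]"
  have cf: "conj_poly phi eta = [:e/c0, b0, 0, p3*c0^2:]"
    unfolding eta_def ph using conj_formula[OF c0, of p0 p1 p2 p3 d0] k
    by (simp add: e_def b0_def)
  have deta: "degree eta = 1" using c0 by (simp add: eta_def)
  have nf: "normal_form (conj_poly phi eta)"
    unfolding cf normal_form_def using c0 p3 by (auto simp: c0_def)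
  show ?thesis
  proof (intro exI conjI allI impI)
    show "degree eta = 1" by fact
    show "normal_form (conj_poly phi eta)" by fact
    fix eta' assume h: "degree eta' = 1 \<and> normal_form (conj_poly phi eta')"
    define d c where "d = coeff eta' 0" "c = coeff eta' 1"
    have e': "eta' = [:d, c:]" "c \<noteq> 0" using deg1_form[of eta'] h d_c_def by auto
    have cf': "conj_poly phi eta' = [:(p0 + p1*d + p2*d^2 + p3*d^3 - d)/c, p1 + 2*p2*d + 3*p3*d^2, (p2 + 3*p3*d)*c, p3*c^2:]"
      unfolding e'(1) ph using conj_formula[OF e'(2)] by simp
    obtain a b where ab: "a \<noteq> 0" "conj_poly phi eta' = [:1, b, 0, a:] \<or> conj_poly phi eta' = [:0, b, 0, a:]"
      using h unfolding normal_form_def by blast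
    have "(p2 + 3*p3*d)*c = 0" using ab(2) unfolding cf' by auto
    hence dd: "d = d0" using uniqd e'(2) by auto
    have cf'': "conj_poly phi eta' = [:e/c, b0, 0, p3*c^2:]"
      unfolding cf' dd by (simp add: e_def b0_def k)
    show "(eta' = eta \<and> conj_poly phi eta' = conj_poly phi eta) \<or>
              (\<exists>a a' b. a \<noteq> 0 \<and> a' \<noteq> 0 \<and>
                 conj_poly phi eta = [:0, b, 0, a:] \<and>
                 conj_poly phi eta' = [:0, b, 0, a':] \<and>
                 (\<exists>c. a' / a = c ^ 2))"
    proof (cases "e = 0")
      case True
      hence "c0 = 1" by (simp add: c0_def)
      then show ?thesis using True cf cf'' p3 e'(2)
        by (intro disjI2 exI[of _ p3] exI[of _ "p3*c^2"] exI[of _ b0]) (auto intro!: exI[of _ c])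
    next
      case False
      have "e/c = 1" using ab(2) False e'(2) unfolding cf'' by auto
      hence "c = e" using e'(2) by (simp add: field_simps)
      hence "eta' = eta" using False by (simp add: e' eta_def c0_def dd)
      then show ?thesis by simp
    qed
  qed
qed
end
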